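(* Let $V$ satisfy (C1)–(C4), let $\mathbb P(A):=V_A(1_\Omega)$, and for each $q\in\mathbb Q$ let $u(\cdot,q)\in\mathcal L^1(\Omega,\mathcal F,\mathbb P)$ be a version of the Radon–Nikodym derivative $d\mu_q/d\mathbb P$, where $\mu_q(A):=V_A(q)$ (which is absolutely continuous with respect to $\mathbb P$), chosen with $u(\omega,0)=0$ for all $\omega$. Define $$A^{\mathbb Q}:=\{\omega: u(\omega,q_1)<u(\omega,q_2)\ \forall q_1<q_2\in\mathbb Q\},\qquad B^{\mathbb Q}:=\{\omega: u(\omega,q)=\inf_{\tilde q\in\mathbb Q,\tilde q>q}u(\omega,\tilde q)\ \forall q\in\mathbb Q\}.$$ Then $A^{\mathbb Q},B^{\mathbb Q}\in\mathcal F$ and $\mathbb P(A^{\mathbb Q})=\mathbb P(B^{\mathbb Q})=1$.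
   Context: $\mathcal L^\infty(\Omega,\mathcal F)$: bounded $\mathcal F$-measurable real functions; $V:\mathcal F\times\mathcal L^\infty(\Omega,\mathcal F)\to\mathbb R$, $(A,f)\mapsto V_A(f)$. (C1) for every $f$, $A\mapsto V_A(f)$ is a finite signed measure, $V_A(0)=0$, and $A\mapsto V_A(1_\Omega)$ is a probability measure; (C2) $V_A(f)=V_\Omega(f1_A)$; (C3) $f\le g$ pointwise implies $V_A(f)\le V_A(g)$ for all $A$, and $\mathbb P(A)>0$ implies $V_A(x)<V_A(y)$ for real $x<y$; (C4) for every $A$, $V_A(f_n)\to V_A(f)$ whenever $(f_n)$ is uniformly bounded and converges pointwise everywhere to $f$. *)

theory Defs
  imports "HOL-Analysis.Analysis"
begin

definition Linf :: "'a measure \<Rightarrow> ('a \<Rightarrow> real) set" where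
  "Linf M = {f. f \<in> borel_measurable M \<and> (\<exists>C. \<forall>\<omega>\<in>space M. \<bar>f \<omega>\<bar> \<le> C)}"

definition C1 :: "'a measure \<Rightarrow> ('a set \<Rightarrow> ('a \<Rightarrow> real) \<Rightarrow> real) \<Rightarrow> bool" where
  "C1 M V \<longleftrightarrow>
     (\<forall>f\<in>Linf M. V {} f = 0 \<and>
        (\<forall>F. range F \<subseteq> sets M \<longrightarrow> disjoint_family F \<longrightarrow>
              (\<lambda>n. V (F n) f) sums V (\<Union>(range F)) f)) \<and>
     (\<forall>A\<in>sets M. V A (\<lambda>_. 0) = 0) \<and>
     (\<forall>A\<in>sets M. V A (\<lambda>_. 1) \<ge> 0) \<and> V (space M) (\<lambda>_. 1) = 1"

definition C2 :: "'a measure \<Rightarrow> ('a set \<Rightarrow> ('a \<Rightarrow> real) \<Rightarrow> real) \<Rightarrow> bool" where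
  "C2 M V \<longleftrightarrow> (\<forall>A\<in>sets M. \<forall>f\<in>Linf M. V A f = V (space M) (\<lambda>\<omega>. f \<omega> * indicator A \<omega>))"

definition C3 :: "'a measure \<Rightarrow> ('a set \<Rightarrow> ('a \<Rightarrow> real) \<Rightarrow> real) \<Rightarrow> bool" where
  "C3 M V \<longleftrightarrow>
     (\<forall>f\<in>Linf M. \<forall>g\<in>Linf M. (\<forall>\<omega>\<in>space M. f \<omega> \<le> g \<omega>) \<longrightarrow>
        (\<forall>A\<in>sets M. V A f \<le> V A g)) \<and>
     (\<forall>A\<in>sets M. V A (\<lambda>_. 1) > 0 \<longrightarrow> (\<forall>x y::real. x < y \<longrightarrow> V A (\<lambda>_. x) < V A (\<lambda>_. y)))"

definition C4 :: "'a measure \<Rightarrow> ('a set \<Rightarrow> ('a \<Rightarrow> real) \<Rightarrow> real) \<Rightarrow> bool" where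
  "C4 M V \<longleftrightarrow>
     (\<forall>A\<in>sets M. \<forall>fs f. (\<forall>n. fs n \<in> Linf M) \<longrightarrow> f \<in> Linf M \<longrightarrow>
        (\<exists>C. \<forall>n. \<forall>\<omega>\<in>space M. \<bar>fs n \<omega>\<bar> \<le> C) \<longrightarrow>
        (\<forall>\<omega>\<in>space M. (\<lambda>n. fs n \<omega>) \<longlonglongrightarrow> f \<omega>) \<longrightarrow>
        (\<lambda>n. V A (fs n)) \<longlonglongrightarrow> V A f)"

definition Vprob :: "'a measure \<Rightarrow> ('a set \<Rightarrow> ('a \<Rightarrow> real) \<Rightarrow> real) \<Rightarrow> 'a measure" where
  "Vprob M V = measure_of (space M) (sets M) (\<lambda>A. ennreal (V A (\<lambda>_. 1)))"

end

theory Submission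
  imports Defs "HOL-Probability.Probability"
begin

lemma Linf_const: "(\<lambda>_. c) \<in> Linf M"
  unfolding Linf_def by auto

lemma Vprob_sets: "sets (Vprob M V) = sets M"
  unfolding Vprob_def by simp

lemma Vprob_space: "space (Vprob M V) = space M"
  by (rule sets_eq_imp_space_eq[OF Vprob_sets])

lemma Vprob_emeasure:
  assumes "C1 M V" "A \<in> sets M"
  shows "emeasure (Vprob M V) A = ennreal (V A (\<lambda>_. 1))"
proof -
  have sa: "\<forall>f\<in>Linf M. V {} f = 0 \<and>
        (\<forall>F. range F \<subseteq> sets M \<longrightarrow> disjoint_family F \<longrightarrow>
              (\<lambda>n. V (F n) f) sums V (\<Union>(range F)) f)"
    using assms(1) unfolding C1_def by (rule conjunct1)
  have sb: "\<forall>A\<in>sets M. V A (\<lambda>_. 1) \<ge> 0"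
    using assms(1) unfolding C1_def by (elim conjE)
  have one: "V {} (\<lambda>_. 1) = 0 \<and>
        (\<forall>F. range F \<subseteq> sets M \<longrightarrow> disjoint_family F \<longrightarrow>
              (\<lambda>n. V (F n) (\<lambda>_. 1)) sums V (\<Union>(range F)) (\<lambda>_. 1))"
    by (rule bspec[OF sa Linf_const])
  show ?thesis
  unfolding Vprob_def
  proof (rule emeasure_measure_of_sigma)
    show "sigma_algebra (space M) (sets M)" by (rule sets.sigma_algebra_axioms)
    show "positive (sets M) (\<lambda>A. ennreal (V A (\<lambda>_. 1)))"
      using conjunct1[OF one] by (simp add: positive_def)
    show "countably_additive (sets M) (\<lambda>A. ennreal (V A (\<lambda>_. 1)))"
      unfolding countably_additive_def
    proof (intro allI impI)
      fix F :: "nat \<Rightarrow> _" assume F: "range F \<subseteq> sets M" "disjoint_family F"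
      have s: "(\<lambda>n. V (F n) (\<lambda>_. 1)) sums V (\<Union>(range F)) (\<lambda>_. 1)"
        using conjunct2[OF one] F by blast
      have Fn: "F n \<in> sets M" for n using F(1) by (rule range_subsetD)
      have nn: "0 \<le> V (F n) (\<lambda>_. 1)" for n using bspec[OF sb Fn] .
      show "(\<Sum>i. ennreal (V (F i) (\<lambda>_. 1))) = ennreal (V (\<Union>(range F)) (\<lambda>_. 1))"
        by (rule suminf_ennreal_eq[OF nn s])
    qed
  qed (fact assms(2))
qed

lemma Vprob_measure:
  assumes "C1 M V" "A \<in> sets M"
  shows "measure (Vprob M V) A = V A (\<lambda>_. 1)"
  using Vprob_emeasure[OF assms] assms unfolding measure_def C1_def by auto

lemma Vprob_prob: assumes "C1 M V" shows "prob_space (Vprob M V)"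
proof
  show "emeasure (Vprob M V) (space (Vprob M V)) = 1"
    using Vprob_emeasure[OF assms, of "space M"] assms unfolding C1_def Vprob_space by simp
qed

lemma pointwise_inf:
  fixes f :: "rat \<Rightarrow> real"
  assumes mono: "\<forall>q1 q2. q1 < q2 \<longrightarrow> f q1 < f q2"
    and nF: "\<forall>k::nat. \<not> (\<forall>n::nat. f q + inverse (real (Suc k)) \<le> f (q + inverse (of_nat (Suc n))))"
  shows "ereal (f q) = (INF q'\<in>{q'. q' > q}. ereal (f q'))"
proof (rule antisym)
  show "ereal (f q) \<le> (INF q'\<in>{q'. q' > q}. ereal (f q'))"
    using mono by (intro INF_greatest) (auto intro: less_imp_le)
  show "(INF q'\<in>{q'. q' > q}. ereal (f q')) \<le> ereal (f q)"
  proof (rule ereal_le_epsilon2)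
    fix e :: real assume e: "0 < e"
    obtain k where k: "inverse (real (Suc k)) < e" using reals_Archimedean[OF e] by blast
    obtain n where n: "f (q + inverse (of_nat (Suc n))) < f q + inverse (real (Suc k))"
      using nF by (meson not_le)
    have "q < q + inverse (of_nat (Suc n))" by simp
    then have "(INF q'\<in>{q'. q' > q}. ereal (f q')) \<le> ereal (f (q + inverse (of_nat (Suc n))))"
      by (intro INF_lower) simp
    also have "\<dots> \<le> ereal (f q + e)" using n k by simp
    finally show "(INF q'\<in>{q'. q' > q}. ereal (f q')) \<le> ereal (f q) + ereal e" by simp
  qed
qed

theorem mainTheorem9:
  fixes M :: "'a measure"
    and V :: "'a set \<Rightarrow> ('a \<Rightarrow> real) \<Rightarrow> real"
    and u :: "'a \<Rightarrow> rat \<Rightarrow> real"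
  assumes "C1 M V" and "C2 M V" and "C3 M V" and "C4 M V"
    and u_int: "\<And>q. integrable (Vprob M V) (\<lambda>\<omega>. u \<omega> q)"
    and u_RN: "\<And>q A. A \<in> sets M \<Longrightarrow>
                 V A (\<lambda>_. real_of_rat q) = (\<integral>\<omega>\<in>A. u \<omega> q \<partial>(Vprob M V))"
    and u0: "\<And>\<omega>. u \<omega> 0 = 0"
  defines "AQ \<equiv> {\<omega>\<in>space M. \<forall>q1 q2::rat. q1 < q2 \<longrightarrow> u \<omega> q1 < u \<omega> q2}"
    and "BQ \<equiv> {\<omega>\<in>space M. \<forall>q::rat.
                 ereal (u \<omega> q) = (INF q'\<in>{q'. q' > q}. ereal (u \<omega> q'))}"
  shows "AQ \<in> sets M \<and> BQ \<in> sets M \<and> V AQ (\<lambda>_. 1) = 1 \<and> V BQ (\<lambda>_. 1) = 1"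
proof -
  define P where "P = Vprob M V"
  interpret P: prob_space P unfolding P_def by (rule Vprob_prob[OF assms(1)])
  have sP: "sets P = sets M" unfolding P_def by (rule Vprob_sets)
  have spP: "space P = space M" unfolding P_def by (rule Vprob_space)
  have meas[measurable]: "(\<lambda>\<omega>. u \<omega> q) \<in> borel_measurable M" for q
    using borel_measurable_integrable[OF u_int[of q]] measurable_cong_sets[OF Vprob_sets refl] by blast
  have seti: "set_integrable P A (\<lambda>\<omega>. u \<omega> q)" if "A \<in> sets M" for A q
    unfolding set_integrable_def P_def
    using integrable_mult_indicator[of A "Vprob M V" "\<lambda>\<omega>. u \<omega> q"] that u_int Vprob_sets by auto
  have setc: "set_integrable P A (\<lambda>\<omega>. c)" if "A \<in> sets M" for A and c :: real
    unfolding set_integrable_def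
    using integrable_mult_indicator[of A P "\<lambda>\<omega>. c"] that sP by auto
  have intc: "(\<integral>\<omega>\<in>A. c \<partial>P) = measure P A * c" if "A \<in> sets M" for A and c :: real
    using set_integral_const[of A P c] that sP P.emeasure_finite by auto
  have RN: "V A (\<lambda>_. real_of_rat q) = (\<integral>\<omega>\<in>A. u \<omega> q \<partial>P)" if "A \<in> sets M" for A q
    using u_RN[OF that] unfolding P_def .
  have mP: "measure P A = V A (\<lambda>_. 1)" if "A \<in> sets M" for A
    unfolding P_def using Vprob_measure[OF assms(1) that] .
  have C3': "V A (\<lambda>_. x) < V A (\<lambda>_. y)" if "A \<in> sets M" "V A (\<lambda>_. 1) > 0" "x < y" for A x y
    using assms(3) that unfolding C3_def by blast

  have nullE: "AE \<omega> in P. u \<omega> q1 < u \<omega> q2" if q12: "q1 < q2" for q1 q2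
  proof -
    define E where "E = {\<omega>\<in>space M. \<not> u \<omega> q1 < u \<omega> q2}"
    have E: "E \<in> sets M" unfolding E_def by measurable
    have "(\<integral>\<omega>\<in>E. u \<omega> q2 \<partial>P) \<le> (\<integral>\<omega>\<in>E. u \<omega> q1 \<partial>P)"
      by (rule set_integral_mono[OF seti[OF E] seti[OF E]]) (auto simp: E_def)
    then have le: "V E (\<lambda>_. real_of_rat q2) \<le> V E (\<lambda>_. real_of_rat q1)"
      using RN[OF E] by simp
    have "\<not> V E (\<lambda>_. 1) > 0"
    proof
      assume "V E (\<lambda>_. 1) > 0"
      then have "V E (\<lambda>_. real_of_rat q1) < V E (\<lambda>_. real_of_rat q2)"
        using C3'[OF E] q12 by (simp add: of_rat_less)
      with le show False by simp
    qed
    then have "measure P E = 0" using mP[OF E] measure_nonneg[of P E] by simp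
    then have "emeasure P E = 0" using P.emeasure_eq_measure by simp
    then show ?thesis
      by (subst AE_iff_measurable[of E]) (auto simp: sP E E_def spP)
  qed
  have AEmono: "AE \<omega> in P. \<forall>q1 q2::rat. q1 < q2 \<longrightarrow> u \<omega> q1 < u \<omega> q2"
  proof -
    have "AE \<omega> in P. q1 < q2 \<longrightarrow> u \<omega> q1 < u \<omega> q2" for q1 q2
    proof (cases "q1 < q2")
      case True then show ?thesis using nullE[OF True] by simp
    qed simp
    then show ?thesis by (simp add: AE_all_countable)
  qed
  have AQ: "AQ \<in> sets M" unfolding AQ_def by measurable
  have "measure P AQ = 1"
    using P.prob_Collect_eq_1[of "\<lambda>\<omega>. \<forall>q1 q2::rat. q1 < q2 \<longrightarrow> u \<omega> q1 < u \<omega> q2"] AQ AEmono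
    unfolding AQ_def spP sP by simp
  then have VA: "V AQ (\<lambda>_. 1) = 1" using mP[OF AQ] by simp

  have nullF: "AE \<omega> in P. \<not> (\<forall>n::nat. u \<omega> q + inverse (real (Suc k)) \<le> u \<omega> (q + inverse (of_nat (Suc n))))"
    for q :: rat and k :: nat
  proof -
    define c where "c = inverse (real (Suc k))"
    define r where "r n = q + inverse (of_nat (Suc n))" for n :: nat
    define F where "F = {\<omega>\<in>space M. \<forall>n::nat. u \<omega> q + c \<le> u \<omega> (r n)}"
    have F: "F \<in> sets M" unfolding F_def by measurable
    have c: "c > 0" unfolding c_def by simp
    have rr: "real_of_rat (r n) = real_of_rat q + inverse (real (Suc n))" for n
      unfolding r_def by (simp add: of_rat_add of_rat_inverse)
    have tend: "(\<lambda>n. V F (\<lambda>_. real_of_rat (r n))) \<longlonglongrightarrow> V F (\<lambda>_. real_of_rat q)"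
    proof -
      have lim: "(\<lambda>n. real_of_rat q + inverse (real (Suc n))) \<longlonglongrightarrow> real_of_rat q"
        using tendsto_add[OF tendsto_const LIMSEQ_inverse_real_of_nat, of "real_of_rat q"] by simp
      have bnd: "\<bar>real_of_rat q + inverse (real (Suc n))\<bar> \<le> \<bar>real_of_rat q\<bar> + 1" for n
      proof -
        have "inverse (real (Suc n)) \<le> 1" by (simp add: inverse_le_1_iff)
        moreover have "inverse (real (Suc n)) \<ge> 0" by simp
        ultimately show ?thesis by linarith
      qed
      have c4: "\<And>A fs f. A\<in>sets M \<Longrightarrow> (\<forall>n. fs n \<in> Linf M) \<Longrightarrow> f \<in> Linf M \<Longrightarrow>
          (\<exists>C. \<forall>n. \<forall>\<omega>\<in>space M. \<bar>fs n \<omega>\<bar> \<le> C) \<Longrightarrow>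
          (\<forall>\<omega>\<in>space M. (\<lambda>n. fs n \<omega>) \<longlonglongrightarrow> f \<omega>) \<Longrightarrow>
          (\<lambda>n. V A (fs n)) \<longlonglongrightarrow> V A f"
        using assms(4) unfolding C4_def by blast
      show ?thesis
        unfolding rr
        apply (rule c4[OF F])
           apply (simp add: Linf_const)
          apply (rule Linf_const)
         apply (rule exI[of _ "\<bar>real_of_rat q\<bar> + 1"])
        using bnd apply simp
        using lim apply simp
        done
    qed
    have lower: "V F (\<lambda>_. real_of_rat q) + measure P F * c \<le> V F (\<lambda>_. real_of_rat (r n))" for n
    proof -
      have "(\<integral>\<omega>\<in>F. u \<omega> q + c \<partial>P) \<le> (\<integral>\<omega>\<in>F. u \<omega> (r n) \<partial>P)"
        by (rule set_integral_mono[OF set_integral_add(1)[OF seti[OF F] setc[OF F]] seti[OF F]])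
          (unfold F_def, blast)
      then show ?thesis
        using set_integral_add(2)[OF seti[OF F] setc[OF F], of q c] intc[OF F, of c] RN[OF F] by simp
    qed
    have "V F (\<lambda>_. real_of_rat q) + measure P F * c \<le> V F (\<lambda>_. real_of_rat q)"
      by (rule LIMSEQ_le_const[OF tend]) (use lower in blast)
    then have "measure P F * c \<le> 0" by simp
    then have "measure P F \<le> 0" using c by (simp add: mult_le_0_iff)
    then have em: "emeasure P F = 0" using P.emeasure_eq_measure measure_nonneg[of P F] by simp
    have Fp: "F \<in> sets P" using F sP by simp
    have eqset: "{\<omega>\<in>space P. \<not> \<not> (\<forall>n::nat. u \<omega> q + inverse (real (Suc k)) \<le> u \<omega> (q + inverse (of_nat (Suc n))))} = F"
      unfolding F_def c_def r_def spP not_not by (rule refl)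
    show ?thesis
      by (rule AE_iff_measurable[OF Fp eqset, THEN iffD2]) (rule em)
  qed
  have AEF: "AE \<omega> in P. \<forall>q::rat. \<forall>k::nat. \<not> (\<forall>n::nat. u \<omega> q + inverse (real (Suc k)) \<le> u \<omega> (q + inverse (of_nat (Suc n))))"
    by (intro AE_all_countable[THEN iffD2] allI nullF)
  have AEB: "AE \<omega> in P. \<forall>q::rat. ereal (u \<omega> q) = (INF q'\<in>{q'. q' > q}. ereal (u \<omega> q'))"
    using AEmono AEF
  proof eventually_elim
    case (elim \<omega>)
    then show ?case using pointwise_inf[of "u \<omega>"] by blast
  qed
  have BQ: "BQ \<in> sets M" unfolding BQ_def by measurable
  have "measure P BQ = 1"
    using P.prob_Collect_eq_1[of "\<lambda>\<omega>. \<forall>q::rat. ereal (u \<omega> q) = (INF q'\<in>{q'. q' > q}. ereal (u \<omega> q'))"] BQ AEB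
    unfolding BQ_def spP sP by simp
  then have VB: "V BQ (\<lambda>_. 1) = 1" using mP[OF BQ] by simp
  show ?thesis using AQ BQ VA VB by blast
qed

end
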